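(* A binary network $N$ is orchard if and only if $N$ admits an HGT-consistent labelling.
   Context: A (directed phylogenetic) network on a finite taxa set $X$ is a directed acyclic graph without parallel arcs whose nodes are of the following types: a unique root (indegree 0, outdegree 1); tree nodes (indegree 1, outdegree at least 2); reticulations (indegree at least 2, outdegree 1); leaves (indegree 1, outdegree 0), the leaves being bijectively labelled by $X$. Non-leaf nodes are called internal. A network is binary if every tree node and every reticulation has total degree (indegree plus outdegree) exactly 3. A tree is a network without reticulations. Orchard networks: An ordered pair of leaves $(x,y)$ is a cherry if $x$ and $y$ have a common parent; it is a reticulated cherry if the parent $p_x$ of $x$ is a reticulation and $p_x$ and $y$ have a common parent. Let $p_x,p_y$ be the parents of $x,y$. Reducing $(x,y)$ in a network $N$: if $(x,y)$ is a cherry, delete $x$ and suppress $p_x$ if it now has indegree 1 and outdegree 1; if $(x,y)$ is a reticulated cherry, delete the arc $(p_y,p_x)$ and suppress any resulting node of indegree 1 and outdegree 1; otherwise do nothing. (Suppressing a node $v$ with one parent $u$ and one child $w$ means deleting $v$ and adding the arc $(u,w)$.) For a sequence $S$ of ordered pairs, $NS$ denotes the result of reducing the pairs of $S$ in order. $N$ is orchard if there is a sequence $S$ such that $NS$ is a tree with exactly one leaf. HGT-consistent labelling: Let $N$ be a binary network with node set $V$. An HGT-consistent labelling of $N$ is a map $t:V\to\mathbb{R}$ such that (1) for every arc $(u,v)$, $t(u)\le t(v)$, and equality is allowed only if $v$ is a reticulation; (2) every internal node $u$ has a child $v$ with $t(u)<t(v)$; (3) for every reticulation $r$ with parents $u$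 and $v$, exactly one of $t(u)=t(r)$ and $t(v)=t(r)$ holds. *)

theory Defs
  imports Complex_Main
begin

(* A network is represented by its node set V and its arc set A (a set of pairs,
   hence no parallel arcs).  Leaves are identified with the taxa they carry. *)

type_synonym 'a net = "'a set \<times> ('a \<times> 'a) set"

definition indeg :: "('a \<times> 'a) set \<Rightarrow> 'a \<Rightarrow> nat" where
  "indeg A v = card {u. (u, v) \<in> A}"

definition outdeg :: "('a \<times> 'a) set \<Rightarrow> 'a \<Rightarrow> nat" where
  "outdeg A v = card {w. (v, w) \<in> A}"

definition is_root :: "('a \<times> 'a) set \<Rightarrow> 'a \<Rightarrow> bool" where
  "is_root A v \<longleftrightarrow> indeg A v = 0 \<and> outdeg A v = 1"

definition is_tree_node :: "('a \<times> 'a) set \<Rightarrow> 'a \<Rightarrow> bool" where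
  "is_tree_node A v \<longleftrightarrow> indeg A v = 1 \<and> outdeg A v \<ge> 2"

definition is_ret :: "('a \<times> 'a) set \<Rightarrow> 'a \<Rightarrow> bool" where
  "is_ret A v \<longleftrightarrow> indeg A v \<ge> 2 \<and> outdeg A v = 1"

definition is_leaf :: "('a \<times> 'a) set \<Rightarrow> 'a \<Rightarrow> bool" where
  "is_leaf A v \<longleftrightarrow> indeg A v = 1 \<and> outdeg A v = 0"

definition network :: "'a net \<Rightarrow> bool" where
  "network N \<longleftrightarrow> (case N of (V, A) \<Rightarrow>
     finite V \<and> A \<subseteq> V \<times> V \<and> acyclic A \<and>
     (\<exists>!r. r \<in> V \<and> is_root A r) \<and>
     (\<forall>v\<in>V. is_root A v \<or> is_tree_node A v \<or> is_ret A v \<or> is_leaf A v))"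

definition binary :: "'a net \<Rightarrow> bool" where
  "binary N \<longleftrightarrow> (case N of (V, A) \<Rightarrow>
     (\<forall>v\<in>V. (is_tree_node A v \<or> is_ret A v) \<longrightarrow> indeg A v + outdeg A v = 3))"

definition is_tree :: "'a net \<Rightarrow> bool" where
  "is_tree N \<longleftrightarrow> network N \<and> (\<forall>v\<in>fst N. \<not> is_ret (snd N) v)"

definition leaves :: "'a net \<Rightarrow> 'a set" where
  "leaves N = {v \<in> fst N. is_leaf (snd N) v}"

definition suppress :: "'a net \<Rightarrow> 'a \<Rightarrow> 'a net" where
  "suppress N v = (case N of (V, A) \<Rightarrow>
     (V - {v}, {(a, b) \<in> A. a \<noteq> v \<and> b \<noteq> v} \<union> {(u, w). (u, v) \<in> A \<and> (v, w) \<in> A}))"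

definition suppress_if :: "'a net \<Rightarrow> 'a \<Rightarrow> 'a net" where
  "suppress_if N v = (if v \<in> fst N \<and> indeg (snd N) v = 1 \<and> outdeg (snd N) v = 1
                      then suppress N v else N)"

definition parent :: "('a \<times> 'a) set \<Rightarrow> 'a \<Rightarrow> 'a" where
  "parent A x = (THE p. (p, x) \<in> A)"

definition is_cherry :: "'a net \<Rightarrow> 'a \<Rightarrow> 'a \<Rightarrow> bool" where
  "is_cherry N x y \<longleftrightarrow> x \<in> leaves N \<and> y \<in> leaves N \<and> x \<noteq> y \<and>
     (\<exists>p. (p, x) \<in> snd N \<and> (p, y) \<in> snd N)"

definition is_ret_cherry :: "'a net \<Rightarrow> 'a \<Rightarrow> 'a \<Rightarrow> bool" where
  "is_ret_cherry N x y \<longleftrightarrow> x \<in> leaves N \<and> y \<in> leaves N \<and> x \<noteq> y \<and>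
     is_ret (snd N) (parent (snd N) x) \<and>
     (\<exists>q. (q, parent (snd N) x) \<in> snd N \<and> (q, y) \<in> snd N)"

definition reduce_pair :: "'a net \<Rightarrow> 'a \<times> 'a \<Rightarrow> 'a net" where
  "reduce_pair N xy = (case xy of (x, y) \<Rightarrow>
     (let px = parent (snd N) x; py = parent (snd N) y in
      if is_cherry N x y then
        suppress_if (fst N - {x}, snd N - {(px, x)}) px
      else if is_ret_cherry N x y then
        suppress_if (suppress_if (fst N, snd N - {(py, px)}) px) py
      else N))"

definition reduce_seq :: "'a net \<Rightarrow> ('a \<times> 'a) list \<Rightarrow> 'a net" where
  "reduce_seq N S = foldl reduce_pair N S"

definition orchard :: "'a net \<Rightarrow> bool" where
  "orchard N \<longleftrightarrow> (\<exists>S. is_tree (reduce_seq N S) \<and> card (leaves (reduce_seq N S)) = 1)"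

definition hgt_consistent :: "'a net \<Rightarrow> ('a \<Rightarrow> real) \<Rightarrow> bool" where
  "hgt_consistent N t \<longleftrightarrow> (case N of (V, A) \<Rightarrow>
     (\<forall>(u, v)\<in>A. t u \<le> t v \<and> (t u = t v \<longrightarrow> is_ret A v)) \<and>
     (\<forall>u\<in>V. \<not> is_leaf A u \<longrightarrow> (\<exists>v. (u, v) \<in> A \<and> t u < t v)) \<and>
     (\<forall>r\<in>V. is_ret A r \<longrightarrow>
        (\<forall>u v. (u, r) \<in> A \<and> (v, r) \<in> A \<and> u \<noteq> v \<longrightarrow> ((t u = t r) \<noteq> (t v = t r)))))"

end

theory Submission
  imports Defs
begin


definition ins :: "('a \<times> 'a) set \<Rightarrow> 'a \<Rightarrow> 'a set" where "ins A v = {u. (u,v) \<in> A}"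
definition outs :: "('a \<times> 'a) set \<Rightarrow> 'a \<Rightarrow> 'a set" where "outs A v = {u. (v,u) \<in> A}"

lemma indeg_ins: "indeg A v = card (ins A v)" by (simp add: indeg_def ins_def)
lemma outdeg_outs: "outdeg A v = card (outs A v)" by (simp add: outdeg_def outs_def)

lemma net_basic:
  assumes "network (V,A)"
  shows "finite V" "A \<subseteq> V \<times> V" "acyclic A" "finite A"
    "\<And>v. finite (ins A v)" "\<And>v. finite (outs A v)"
proof -
  show fV: "finite V" and AV: "A \<subseteq> V \<times> V" and "acyclic A" using assms by (auto simp: network_def)
  show fA: "finite A" using fV AV finite_subset by blast
  show "\<And>v. finite (ins A v)"
  proof -
    fix v have "ins A v \<subseteq> fst ` A" by (force simp: ins_def)
    then show "finite (ins A v)" using fA finite_subset by blast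
  qed
  show "\<And>v. finite (outs A v)"
  proof -
    fix v have "outs A v \<subseteq> snd ` A" by (force simp: outs_def)
    then show "finite (outs A v)" using fA finite_subset by blast
  qed
qed

lemma net_types:
  assumes "network (V,A)" "v \<in> V"
  shows "is_root A v \<or> is_tree_node A v \<or> is_ret A v \<or> is_leaf A v"
proof -
  have "\<forall>v\<in>V. is_root A v \<or> is_tree_node A v \<or> is_ret A v \<or> is_leaf A v" using assms(1) by (simp add: network_def)
  thus ?thesis using assms(2) by blast
qed

lemma net_root: assumes "network (V,A)" obtains r where "r \<in> V" "is_root A r" "\<And>r'. r' \<in> V \<Longrightarrow> is_root A r' \<Longrightarrow> r' = r"
proof -
  from assms have "\<exists>!r. r \<in> V \<and> is_root A r" by (simp add: network_def)
  then show ?thesis using that by metis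
qed

lemma card1: assumes "card S = 1" obtains a where "S = {a}" using assms by (meson card_1_singletonE)
lemma card2: assumes "card S = 2" obtains a b where "S = {a,b}" "a \<noteq> b" using assms by (meson card_2_iff)

lemma bin_cases:
  assumes "network (V,A)" "binary (V,A)" "v \<in> V"
  shows "(ins A v = {} \<and> card (outs A v) = 1) \<or> (card (ins A v) = 1 \<and> card (outs A v) = 2)
    \<or> (card (ins A v) = 2 \<and> card (outs A v) = 1) \<or> (card (ins A v) = 1 \<and> outs A v = {})"
proof -
  have f: "finite (ins A v)" "finite (outs A v)" using net_basic[OF assms(1)] by auto
  have b: "is_tree_node A v \<or> is_ret A v \<Longrightarrow> indeg A v + outdeg A v = 3" using assms(2,3) by (auto simp: binary_def)
  show ?thesis using net_types[OF assms(1,3)] b f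
    by (auto simp: is_root_def is_tree_node_def is_ret_def is_leaf_def indeg_ins outdeg_outs)
qed

lemma root_ins: "is_root A r \<Longrightarrow> finite (ins A r) \<Longrightarrow> ins A r = {}"
  by (simp add: is_root_def indeg_ins)

lemma net_preserve:
  assumes N: "network (V,A)" "binary (V,A)" and sub: "V' \<subseteq> V" "A' \<subseteq> V' \<times> V'" "A' \<subseteq> A\<^sup>+"
   and deg: "\<And>v. v\<in>V' \<Longrightarrow> indeg A' v = indeg A v \<and> outdeg A' v = outdeg A v"
   and r: "r \<in> V'" "is_root A r"
  shows "network (V',A') \<and> binary (V',A')"
proof -
  have fV: "finite V" "acyclic A" using net_basic[OF N(1)] by auto
  have "A'\<^sup>+ \<subseteq> (A\<^sup>+)\<^sup>+" using sub(3) trancl_mono by blast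
  hence "A'\<^sup>+ \<subseteq> A\<^sup>+" by simp
  hence ac: "acyclic A'" using fV(2) unfolding acyclic_def by blast
  have eqs: "\<And>v. v\<in>V' \<Longrightarrow> (is_root A' v = is_root A v) \<and> (is_tree_node A' v = is_tree_node A v)
      \<and> (is_ret A' v = is_ret A v) \<and> (is_leaf A' v = is_leaf A v)"
    using deg by (simp add: is_root_def is_tree_node_def is_ret_def is_leaf_def)
  obtain r0 where r0: "r0 \<in> V" "is_root A r0" "\<And>r'. r' \<in> V \<Longrightarrow> is_root A r' \<Longrightarrow> r' = r0" using net_root[OF N(1)] by blast
  have "\<exists>!r. r \<in> V' \<and> is_root A' r"
    using r eqs r0 sub(1) by blast
  moreover have "\<forall>v\<in>V'. is_root A' v \<or> is_tree_node A' v \<or> is_ret A' v \<or> is_leaf A' v"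
    using eqs net_types[OF N(1)] sub(1) by blast
  moreover have "finite V'" using fV sub(1) finite_subset by blast
  ultimately have "network (V',A')" using ac sub(2) by (simp add: network_def)
  moreover have "binary (V',A')" using N(2) deg eqs sub(1) by (auto simp: binary_def)
  ultimately show ?thesis by simp
qed



lemma leaf_outs: "is_leaf A v \<Longrightarrow> finite (outs A v) \<Longrightarrow> outs A v = {}"
  by (simp add: is_leaf_def outdeg_outs)

lemma has_child_nonleaf: "(a,b) \<in> A \<Longrightarrow> finite (outs A a) \<Longrightarrow> \<not> is_leaf A a"
  using leaf_outs by (fastforce simp: outs_def)

lemma ret_nonleaf: "is_ret A v \<Longrightarrow> \<not> is_leaf A v"
  by (simp add: is_ret_def is_leaf_def)

lemma topo_label:
  assumes "finite V" "A \<subseteq> V \<times> V" "acyclic A"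
  shows "\<exists>t::'a \<Rightarrow> real. \<forall>(u,v)\<in>A. t u < t v"
proof -
  define t where "t v = real (card {u. (u,v) \<in> A\<^sup>+})" for v
  have fin: "finite {u. (u,v) \<in> A\<^sup>+}" for v
  proof -
    have "A\<^sup>+ \<subseteq> V \<times> V" using assms(2) trancl_subset_Sigma by blast
    hence "{u. (u,v) \<in> A\<^sup>+} \<subseteq> V" by blast
    thus ?thesis using assms(1) finite_subset by blast
  qed
  have "t u < t v" if "(u,v) \<in> A" for u v
  proof -
    have "{u'. (u',u) \<in> A\<^sup>+} \<subset> {u'. (u',v) \<in> A\<^sup>+}"
    proof
      show "{u'. (u',u) \<in> A\<^sup>+} \<subseteq> {u'. (u',v) \<in> A\<^sup>+}" using that by (auto intro: trancl_into_trancl)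
      have "u \<in> {u'. (u',v) \<in> A\<^sup>+}" using that by auto
      moreover have "u \<notin> {u'. (u',u) \<in> A\<^sup>+}" using assms(3) by (auto simp: acyclic_def)
      ultimately show "{u'. (u',u) \<in> A\<^sup>+} \<noteq> {u'. (u',v) \<in> A\<^sup>+}" by blast
    qed
    hence "card {u'. (u',u) \<in> A\<^sup>+} < card {u'. (u',v) \<in> A\<^sup>+}" using fin psubset_card_mono by blast
    thus ?thesis by (simp add: t_def)
  qed
  thus ?thesis by blast
qed

lemma tree_hgt:
  assumes "is_tree (V,A)"
  shows "\<exists>t. hgt_consistent (V,A) t"
proof -
  have N: "network (V,A)" and nr: "\<forall>v\<in>V. \<not> is_ret A v" using assms by (auto simp: is_tree_def)
  note b = net_basic[OF N]
  obtain t :: "'a \<Rightarrow> real" where t: "\<forall>(u,v)\<in>A. t u < t v" using topo_label[OF b(1,2,3)] by blast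
  have "\<exists>v. (u,v) \<in> A \<and> t u < t v" if "u \<in> V" "\<not> is_leaf A u" for u
  proof -
    have "is_root A u \<or> is_tree_node A u" using net_types[OF N that(1)] nr that by blast
    hence "outs A u \<noteq> {}" by (auto simp: is_root_def is_tree_node_def outdeg_outs)
    then obtain v where "(u,v) \<in> A" by (auto simp: outs_def)
    thus ?thesis using t by blast
  qed
  moreover have "\<forall>(u,v)\<in>A. t u \<le> t v \<and> (t u = t v \<longrightarrow> is_ret A v)" using t by fastforce
  moreover have "\<forall>r\<in>V. \<not> is_ret A r" using nr by blast
  ultimately have "hgt_consistent (V,A) t" by (simp add: hgt_consistent_def)
  thus ?thesis by blast
qed

lemma restrict_hgt:
  assumes N: "network (V,A)" and h: "hgt_consistent (V,A) t"
    and V': "V' = V - D" and A': "A' = {(a,b)\<in>A. a\<notin>D \<and> b\<notin>D} \<union> E" and E: "E \<subseteq> V' \<times> V'"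
    and deg: "\<And>v. v\<in>V' \<Longrightarrow> indeg A' v = indeg A v \<and> outdeg A' v = outdeg A v"
    and R1: "\<And>a b. (a,b)\<in>E \<Longrightarrow> t a < t b"
    and R2: "\<And>u v. u\<in>V' \<Longrightarrow> v\<in>D \<Longrightarrow> (u,v)\<in>A \<Longrightarrow> (\<exists>w. (u,w)\<in>E \<and> t u < t w)"
    and R3: "\<And>a b. (a,b)\<in>E \<Longrightarrow> \<not> is_ret A b"
  shows "hgt_consistent (V',A') t"
proof -
  note b = net_basic[OF N]
  have hh: "(\<forall>(u, v)\<in>A. t u \<le> t v \<and> (t u = t v \<longrightarrow> is_ret A v)) \<and>
     (\<forall>u\<in>V. \<not> is_leaf A u \<longrightarrow> (\<exists>v. (u, v) \<in> A \<and> t u < t v)) \<and>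
     (\<forall>r\<in>V. is_ret A r \<longrightarrow>
        (\<forall>u v. (u, r) \<in> A \<and> (v, r) \<in> A \<and> u \<noteq> v \<longrightarrow> ((t u = t r) \<noteq> (t v = t r))))"
    using h by (simp add: hgt_consistent_def)
  have h1: "\<And>u v. (u,v)\<in>A \<Longrightarrow> t u \<le> t v \<and> (t u = t v \<longrightarrow> is_ret A v)"
   and h2: "\<And>u. u\<in>V \<Longrightarrow> \<not> is_leaf A u \<Longrightarrow> \<exists>v. (u, v) \<in> A \<and> t u < t v"
   and h3: "\<And>r u v. r\<in>V \<Longrightarrow> is_ret A r \<Longrightarrow> (u, r) \<in> A \<Longrightarrow> (v, r) \<in> A \<Longrightarrow> u \<noteq> v \<Longrightarrow> ((t u = t r) \<noteq> (t v = t r))"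
    using hh by blast+
  have eqs: "\<And>v. v\<in>V' \<Longrightarrow> (is_ret A' v = is_ret A v) \<and> (is_leaf A' v = is_leaf A v)"
    using deg by (simp add: is_ret_def is_leaf_def)
  have c1: "t u \<le> t v \<and> (t u = t v \<longrightarrow> is_ret A' v)" if "(u,v)\<in>A'" for u v
  proof (cases "(u,v) \<in> E")
    case True thus ?thesis using R1 by fastforce
  next
    case False
    hence "(u,v)\<in>A" "v \<in> V'" using that A' V' b(2) by auto
    thus ?thesis using h1 eqs by blast
  qed
  have c2: "\<exists>v. (u, v) \<in> A' \<and> t u < t v" if "u\<in>V'" "\<not> is_leaf A' u" for u
  proof -
    have "u \<in> V" "\<not> is_leaf A u" using that eqs V' by auto
    then obtain v where v: "(u,v)\<in>A" "t u < t v" using h2 by blast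
    show ?thesis
    proof (cases "v \<in> D")
      case True thus ?thesis using R2[OF that(1) True v(1)] A' by blast
    next
      case False thus ?thesis using v that(1) V' A' by blast
    qed
  qed
  have c3: "(t u = t r) \<noteq> (t v = t r)" if "r\<in>V'" "is_ret A' r" "(u, r) \<in> A'" "(v, r) \<in> A'" "u \<noteq> v" for r u v
  proof -
    have r: "r \<in> V" "is_ret A r" using that eqs V' by auto
    have "(u,r) \<in> A \<or> (u,r) \<in> E" "(v,r) \<in> A \<or> (v,r) \<in> E" using that(3,4) A' by blast+
    hence "(u,r) \<in> A" "(v,r) \<in> A" using R3 r(2) by blast+
    thus ?thesis using h3 r that(5) by blast
  qed
  have "\<forall>(u,v)\<in>A'. t u \<le> t v \<and> (t u = t v \<longrightarrow> is_ret A' v)" using c1 by blast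
  moreover have "\<forall>u\<in>V'. \<not> is_leaf A' u \<longrightarrow> (\<exists>v. (u, v) \<in> A' \<and> t u < t v)" using c2 by blast
  moreover have "\<forall>r\<in>V'. is_ret A' r \<longrightarrow>
        (\<forall>u v. (u, r) \<in> A' \<and> (v, r) \<in> A' \<and> u \<noteq> v \<longrightarrow> ((t u = t r) \<noteq> (t v = t r)))" using c3 by blast
  ultimately show ?thesis unfolding hgt_consistent_def by simp
qed

lemma extend_hgt:
  assumes N: "network (V,A)" and h: "hgt_consistent (V',A') t'" and DV: "D \<subseteq> V"
    and V': "V' = V - D" and A': "A' = {(a,b)\<in>A. a\<notin>D \<and> b\<notin>D} \<union> E" and E: "E \<subseteq> V' \<times> V'"
    and deg: "\<And>v. v\<in>V' \<Longrightarrow> indeg A' v = indeg A v \<and> outdeg A' v = outdeg A v"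
    and X1: "\<And>a b. a\<in>D \<Longrightarrow> (a,b)\<in>A \<Longrightarrow> \<not> is_leaf A b \<Longrightarrow> b\<in>D \<and> is_ret A b"
    and X2: "\<And>a b. (a,b)\<in>E \<Longrightarrow> \<exists>c\<in>D. (a,c)\<in>A"
    and X3: "\<And>u. u\<in>D \<Longrightarrow> \<not> is_leaf A u \<Longrightarrow> \<exists>w. (u,w)\<in>A \<and> is_leaf A w"
    and X4: "\<And>r u v. r\<in>D \<Longrightarrow> is_ret A r \<Longrightarrow> (u,r)\<in>A \<Longrightarrow> (v,r)\<in>A \<Longrightarrow> u\<noteq>v \<Longrightarrow> (u\<in>D) \<noteq> (v\<in>D)"
  shows "\<exists>t. hgt_consistent (V,A) t"
proof -
  note b = net_basic[OF N]
  have hh: "(\<forall>(u, v)\<in>A'. t' u \<le> t' v \<and> (t' u = t' v \<longrightarrow> is_ret A' v)) \<and>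
     (\<forall>u\<in>V'. \<not> is_leaf A' u \<longrightarrow> (\<exists>v. (u, v) \<in> A' \<and> t' u < t' v)) \<and>
     (\<forall>r\<in>V'. is_ret A' r \<longrightarrow>
        (\<forall>u v. (u, r) \<in> A' \<and> (v, r) \<in> A' \<and> u \<noteq> v \<longrightarrow> ((t' u = t' r) \<noteq> (t' v = t' r))))"
    using h by (simp add: hgt_consistent_def)
  have h1: "\<And>u v. (u,v)\<in>A' \<Longrightarrow> t' u \<le> t' v \<and> (t' u = t' v \<longrightarrow> is_ret A' v)"
   and h2: "\<And>u. u\<in>V' \<Longrightarrow> \<not> is_leaf A' u \<Longrightarrow> \<exists>v. (u, v) \<in> A' \<and> t' u < t' v"
   and h3: "\<And>r u v. r\<in>V' \<Longrightarrow> is_ret A' r \<Longrightarrow> (u, r) \<in> A' \<Longrightarrow> (v, r) \<in> A' \<Longrightarrow> u \<noteq> v \<Longrightarrow> ((t' u = t' r) \<noteq> (t' v = t' r))"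
    using hh by blast+
  have eqs: "\<And>v. v\<in>V' \<Longrightarrow> (is_ret A' v = is_ret A v) \<and> (is_leaf A' v = is_leaf A v)"
    using deg by (simp add: is_ret_def is_leaf_def)
  define m where "m = Max (insert 0 (t' ` V'))"
  have fV': "finite V'" unfolding V' using b(1) by (rule finite_Diff)
  have mle: "v \<in> V' \<Longrightarrow> t' v \<le> m" for v unfolding m_def using fV' by (simp add: Max_ge_iff)
  define t where "t v = (if is_leaf A v then m+2 else if v \<in> D then m+1 else t' v)" for v
  have nl: "\<not> is_leaf A a" if "(a,c)\<in>A" for a c using has_child_nonleaf[OF that b(6)] .
  have inV: "a \<in> V \<and> c \<in> V" if "(a,c)\<in>A" for a c using b(2) that by blast
  have c1: "t u \<le> t v \<and> (t u = t v \<longrightarrow> is_ret A v)" if uv: "(u,v)\<in>A" for u v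
  proof -
    have nu: "\<not> is_leaf A u" using nl uv by blast
    show ?thesis
    proof (cases "is_leaf A v")
      case True
      have "t u \<le> m + 1" using nu mle[of u] inV[OF uv] V' by (auto simp: t_def)
      thus ?thesis using True by (auto simp: t_def)
    next
      case nv: False
      show ?thesis
      proof (cases "u \<in> D")
        case True thus ?thesis using X1[OF True uv nv] nu nv by (auto simp: t_def)
      next
        case uD: False
        show ?thesis
        proof (cases "v \<in> D")
          case True thus ?thesis using uD nu nv mle[of u] inV[OF uv] V' by (auto simp: t_def)
        next
          case False
          hence "(u,v) \<in> A'" "v \<in> V'" using uD uv A' V' inV[OF uv] by auto
          thus ?thesis using h1 eqs uD False nu nv by (auto simp: t_def)
        qed
      qed
    qed
  qed
  have c2: "\<exists>v. (u, v) \<in> A \<and> t u < t v" if u: "u\<in>V" "\<not> is_leaf A u" for u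
  proof (cases "u \<in> D")
    case True
    then obtain w where "(u,w)\<in>A" "is_leaf A w" using X3 u by blast
    thus ?thesis using True u by (auto simp: t_def)
  next
    case uD: False
    hence uV': "u \<in> V'" using V' u by simp
    hence "\<not> is_leaf A' u" using eqs u by blast
    then obtain w where w: "(u,w)\<in>A'" "t' u < t' w" using h2 uV' by blast
    show ?thesis
    proof (cases "(u,w) \<in> E")
      case True
      then obtain c where c: "c \<in> D" "(u,c)\<in>A" using X2 by blast
      have "t c \<ge> m + 1" using c by (auto simp: t_def)
      moreover have "t u \<le> m" using mle uV' u uD by (simp add: t_def)
      ultimately show ?thesis using c by force
    next
      case False
      hence wA: "(u,w)\<in>A" "w \<notin> D" using w A' E by auto
      hence wA3: "w \<in> V'" using V' inV by blast
      show ?thesis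
      proof (cases "is_leaf A w")
        case True thus ?thesis using wA mle[of u] uV' u uD by (force simp: t_def)
      next
        case False thus ?thesis using wA w u uD by (force simp: t_def)
      qed
    qed
  qed
  have c3: "(t u = t r) \<noteq> (t v = t r)" if r: "r\<in>V" "is_ret A r" and uv: "(u, r) \<in> A" "(v, r) \<in> A" "u \<noteq> v" for r u v
  proof -
    have nr: "\<not> is_leaf A r" "\<not> is_leaf A u" "\<not> is_leaf A v" using ret_nonleaf[OF r(2)] nl[OF uv(1)] nl[OF uv(2)] by auto
    show ?thesis
    proof (cases "r \<in> D")
      case True
      have x: "(u\<in>D) \<noteq> (v\<in>D)" using X4[OF True r(2) uv] .
      have "u \<in> V" "v \<in> V" using inV uv by auto
      thus ?thesis using x nr True mle[of u] mle[of v] V' by (auto simp: t_def)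
    next
      case False
      have "u \<notin> D" "v \<notin> D" using X1 False uv nr by blast+
      hence "(u,r) \<in> A'" "(v,r)\<in>A'" "r \<in> V'" using uv False A' V' r by auto
      moreover have "is_ret A' r" using eqs r \<open>r \<in> V'\<close> by blast
      ultimately have "(t' u = t' r) \<noteq> (t' v = t' r)" using h3 uv(3) by blast
      thus ?thesis using nr False \<open>u \<notin> D\<close> \<open>v \<notin> D\<close> by (simp add: t_def)
    qed
  qed
  have "\<forall>(u,v)\<in>A. t u \<le> t v \<and> (t u = t v \<longrightarrow> is_ret A v)" using c1 by blast
  moreover have "\<forall>u\<in>V. \<not> is_leaf A u \<longrightarrow> (\<exists>v. (u, v) \<in> A \<and> t u < t v)" using c2 by blast
  moreover have "\<forall>r\<in>V. is_ret A r \<longrightarrow>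
        (\<forall>u v. (u, r) \<in> A \<and> (v, r) \<in> A \<and> u \<noteq> v \<longrightarrow> ((t u = t r) \<noteq> (t v = t r)))" using c3 by blast
  ultimately have "hgt_consistent (V,A) t" unfolding hgt_consistent_def by simp
  thus ?thesis by blast
qed



lemma noloop: "acyclic A \<Longrightarrow> (a,a) \<notin> A"
  by (auto simp: acyclic_def)

lemma no2cycle: "acyclic A \<Longrightarrow> (a,b) \<in> A \<Longrightarrow> (b,a) \<in> A \<Longrightarrow> False"
proof -
  assume "acyclic A" "(a,b) \<in> A" "(b,a) \<in> A"
  hence "(a,a) \<in> A\<^sup>+" by (meson trancl.simps)
  thus False using \<open>acyclic A\<close> by (auto simp: acyclic_def)
qed

lemma parent_eq: "ins A x = {a} \<Longrightarrow> parent A x = a"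
  unfolding parent_def ins_def by (metis (mono_tags, lifting) mem_Collect_eq singletonD singletonI the_equality)

lemma leaf_ins: assumes "is_leaf A x" "finite (ins A x)" obtains a where "ins A x = {a}"
proof -
  have "card (ins A x) = 1" using assms by (simp add: is_leaf_def indeg_ins)
  thus ?thesis using that card_1_singletonE by metis
qed

lemma leaf_outs2: assumes "network (V,A)" "is_leaf A x" shows "(x,b) \<notin> A"
  using leaf_outs[OF assms(2)] net_basic(6)[OF assms(1)] by (auto simp: outs_def)

lemma root_not_child: assumes "network (V,A)" "is_root A r" shows "(a,r) \<notin> A"
  using root_ins[OF assms(2)] net_basic(5)[OF assms(1)] by (auto simp: ins_def)

lemma leaf_not_ret: "is_leaf A x \<Longrightarrow> \<not> is_ret A x" by (simp add: is_leaf_def is_ret_def)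

lemma card_swap: "finite S \<Longrightarrow> a \<in> S \<Longrightarrow> b \<notin> S \<Longrightarrow> card (insert b (S - {a})) = card S"
  by (simp add: card_insert_disjoint card_Diff_singleton_if) (metis One_nat_def Suc_pred card_gt_0_iff empty_iff)

lemma cherry_struct:
  assumes N: "network (V,A)" "binary (V,A)" and c: "is_cherry (V,A) x y"
  obtains px p where "\<And>a. (a,x) \<in> A \<longleftrightarrow> a = px" "\<And>a. (a,y) \<in> A \<longleftrightarrow> a = px"
    "\<And>b. (px,b) \<in> A \<longleftrightarrow> b = x \<or> b = y" "\<And>a. (a,px) \<in> A \<longleftrightarrow> a = p"
    "\<And>b. (x,b) \<notin> A" "\<And>b. (y,b) \<notin> A"
    "x \<noteq> y" "px \<noteq> x" "px \<noteq> y" "p \<noteq> x" "p \<noteq> y" "p \<noteq> px"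
    "x \<in> V" "y \<in> V" "px \<in> V" "p \<in> V" "parent A x = px" "is_leaf A x" "is_leaf A y"
    "ins A px = {p}" "outs A px = {x,y}"
proof -
  note b = net_basic[OF N(1)]
  have xy: "x \<in> V" "y \<in> V" "is_leaf A x" "is_leaf A y" "x \<noteq> y" using c by (auto simp: is_cherry_def leaves_def)
  obtain px where px: "(px,x) \<in> A" "(px,y) \<in> A" using c by (auto simp: is_cherry_def)
  obtain a where a: "ins A x = {a}" using leaf_ins[OF xy(3) b(5)] by blast
  obtain a' where a': "ins A y = {a'}" using leaf_ins[OF xy(4) b(5)] by blast
  have ax: "a = px" "a' = px" using a a' px by (auto simp: ins_def)
  have pxV: "px \<in> V" using px b(2) by blast
  have "{x,y} \<subseteq> outs A px" using px by (auto simp: outs_def)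
  hence "card {x,y} \<le> card (outs A px)" using b(6) card_mono by blast
  hence c2: "card (outs A px) \<ge> 2" using xy(5) by simp
  hence "card (ins A px) = 1 \<and> card (outs A px) = 2" using bin_cases[OF N pxV] by auto
  then obtain p where p: "ins A px = {p}" and o2: "card (outs A px) = 2" using card_1_singletonE by metis
  have oxy: "outs A px = {x,y}"
    using \<open>{x,y} \<subseteq> outs A px\<close> o2 xy(5) b(6) by (metis card_2_iff card_subset_eq finite.emptyI finite.insertI)
  have pA: "(p,px) \<in> A" using p by (auto simp: ins_def)
  have lx: "\<And>b. (x,b) \<notin> A" "\<And>b. (y,b) \<notin> A" using leaf_outs2[OF N(1)] xy by auto
  have "p \<noteq> px" using noloop[OF b(3)] pA by auto
  moreover have "px \<noteq> x" "px \<noteq> y" using lx px by auto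
  moreover have "p \<noteq> x" "p \<noteq> y" using lx pA by auto
  moreover have "p \<in> V" using pA b(2) by blast
  moreover have "parent A x = px" using parent_eq a ax by simp
  ultimately show ?thesis using that a a' ax p oxy lx xy pxV
    by (simp add: ins_def outs_def set_eq_iff) (metis insertI1 insert_commute insert_iff singletonD)
qed

lemma deg_eq_from_sets:
  assumes "finite (ins A v)" "finite (outs A v)"
    and "card (ins A' v) = card (ins A v)" "card (outs A' v) = card (outs A v)"
  shows "indeg A' v = indeg A v \<and> outdeg A' v = outdeg A v"
  using assms by (simp add: indeg_ins outdeg_outs)

lemma cherry_step:
  assumes N: "network (V,A)" "binary (V,A)" and c: "is_cherry (V,A) x y"
  shows "\<exists>V' A'. reduce_pair (V,A) (x,y) = (V',A') \<and> network (V',A') \<and> binary (V',A') \<and> card V' < card V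
     \<and> (\<forall>t. hgt_consistent (V,A) t \<longrightarrow> hgt_consistent (V',A') t)
     \<and> ((\<exists>t. hgt_consistent (V',A') t) \<longrightarrow> (\<exists>t. hgt_consistent (V,A) t))"
proof -
  note b = net_basic[OF N(1)]
  obtain px p where f1: "\<And>a. (a,x) \<in> A \<longleftrightarrow> a = px" "\<And>a. (a,y) \<in> A \<longleftrightarrow> a = px"
    "\<And>b. (px,b) \<in> A \<longleftrightarrow> b = x \<or> b = y" "\<And>a. (a,px) \<in> A \<longleftrightarrow> a = p"
    "\<And>b. (x,b) \<notin> A" "\<And>b. (y,b) \<notin> A"
    and f2: "x \<noteq> y" "px \<noteq> x" "px \<noteq> y" "p \<noteq> x" "p \<noteq> y" "p \<noteq> px"
    and f3: "x \<in> V" "y \<in> V" "px \<in> V" "p \<in> V" "parent A x = px" "is_leaf A x" "is_leaf A y"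
    and f4: "ins A px = {p}" "outs A px = {x,y}"
    using cherry_struct[OF N c] by blast
  define D where "D = {x,px}"
  define E where "E = {(p,y)}"
  define V' where "V' = V - D"
  define A' where "A' = {(a,b)\<in>A. a\<notin>D \<and> b\<notin>D} \<union> E"
  have s1: "{u. (u,px) \<in> A - {(px,x)}} = {p}" using f1 f2 by auto
  have s2: "{w. (px,w) \<in> A - {(px,x)}} = {y}" using f1 f2 by auto
  have s3: "{u. (u,px) \<in> A} = {p}" "{w. (px,w) \<in> A \<and> w \<noteq> x} = {y}" using f1 f2 by auto
  have "reduce_pair (V,A) (x,y) = suppress (V - {x}, A - {(px,x)}) px"
    unfolding reduce_pair_def suppress_if_def using c f3 f2 by (simp add: indeg_def outdeg_def s1 s2 s3 Let_def)
  also have "\<dots> = (V', A')"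
    unfolding suppress_def V'_def A'_def D_def E_def using f1 f2 by auto
  finally have red: "reduce_pair (V,A) (x,y) = (V', A')" .
  have insA': "ins A' v = (if v = y then {p} else ins A v)" if "v \<in> V'" for v
    using that f1 f2 by (auto simp: ins_def A'_def V'_def D_def E_def)
  have outsA': "outs A' v = (if v = p then insert y (outs A p - {px}) else outs A v)" if "v \<in> V'" for v
    using that f1 f2 by (auto simp: outs_def A'_def V'_def D_def E_def)
  have deg: "indeg A' v = indeg A v \<and> outdeg A' v = outdeg A v" if v: "v \<in> V'" for v
  proof (rule deg_eq_from_sets[OF b(5) b(6)])
    show "card (ins A' v) = card (ins A v)" using insA'[OF v] f1 by (simp add: ins_def)
    have "px \<in> outs A p" "y \<notin> outs A p" using f1 f2 by (auto simp: outs_def)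
    thus "card (outs A' v) = card (outs A v)" using outsA'[OF v] card_swap[OF b(6)] by (cases "v = p") auto
  qed
  obtain r where r: "r \<in> V" "is_root A r" using net_root[OF N(1)] by blast
  have "(px,r) \<notin> A" "(p,r) \<notin> A" using root_not_child[OF N(1) r(2)] by auto
  hence "r \<noteq> x" "r \<noteq> px" using f1 by auto
  hence rV': "r \<in> V'" using r by (auto simp: V'_def D_def)
  have AV: "A' \<subseteq> V' \<times> V'" using b(2) f2 f3 by (auto simp: A'_def V'_def D_def E_def)
  have Atr: "A' \<subseteq> A\<^sup>+"
  proof
    fix e assume "e \<in> A'"
    then consider "e \<in> A" | "e = (p,y)" by (auto simp: A'_def E_def)
    thus "e \<in> A\<^sup>+"
    proof cases
      case 2
      have "(p,px) \<in> A" "(px,y) \<in> A" using f1 by auto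
      thus ?thesis using 2 by auto
    qed (erule r_into_trancl')
  qed
  have net': "network (V',A') \<and> binary (V',A')"
    using net_preserve[OF N _ AV Atr deg rV' r(2)] by (auto simp: V'_def)
  have cardlt: "card V' < card V"
  proof (rule psubset_card_mono[OF b(1)])
    show "V' \<subset> V" using f3 by (auto simp: V'_def D_def)
  qed
  have EV: "E \<subseteq> V' \<times> V'" using AV by (auto simp: A'_def)
  have restr: "hgt_consistent (V',A') t" if h: "hgt_consistent (V,A) t" for t
  proof (rule restrict_hgt[OF N(1) h V'_def A'_def EV deg])
    have hh: "\<And>u v. (u,v)\<in>A \<Longrightarrow> t u \<le> t v \<and> (t u = t v \<longrightarrow> is_ret A v)"
      using h by (auto simp: hgt_consistent_def)
    have "t p \<le> t px" using hh f1 by blast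
    moreover have "t px < t y" using hh[of px y] f1 leaf_not_ret[OF f3(7)] by force
    ultimately have py: "t p < t y" by simp
    show "\<And>a b. (a,b)\<in>E \<Longrightarrow> t a < t b" using py by (simp add: E_def)
    show "\<And>u v. u\<in>V' \<Longrightarrow> v\<in>D \<Longrightarrow> (u,v)\<in>A \<Longrightarrow> (\<exists>w. (u,w)\<in>E \<and> t u < t w)"
      using py f1 by (auto simp: D_def E_def V'_def)
    show "\<And>a b. (a,b)\<in>E \<Longrightarrow> \<not> is_ret A b" using leaf_not_ret[OF f3(7)] by (simp add: E_def)
  qed
  have ext: "\<exists>t. hgt_consistent (V,A) t" if h: "hgt_consistent (V',A') t'" for t'
  proof (rule extend_hgt[OF N(1) h _ V'_def A'_def EV deg])
    show "D \<subseteq> V" using f3 by (simp add: D_def)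
    show "\<And>a b. a\<in>D \<Longrightarrow> (a,b)\<in>A \<Longrightarrow> \<not> is_leaf A b \<Longrightarrow> b\<in>D \<and> is_ret A b"
      using f1 f3 by (auto simp: D_def)
    show "\<And>a b. (a,b)\<in>E \<Longrightarrow> \<exists>c\<in>D. (a,c)\<in>A" using f1 by (auto simp: D_def E_def)
    show "\<And>u. u\<in>D \<Longrightarrow> \<not> is_leaf A u \<Longrightarrow> \<exists>w. (u,w)\<in>A \<and> is_leaf A w"
      using f1 f3 by (auto simp: D_def)
    have "\<not> is_ret A px" using f4 by (simp add: is_ret_def indeg_ins)
    thus "\<And>r u v. r\<in>D \<Longrightarrow> is_ret A r \<Longrightarrow> (u,r)\<in>A \<Longrightarrow> (v,r)\<in>A \<Longrightarrow> u\<noteq>v \<Longrightarrow> (u\<in>D) \<noteq> (v\<in>D)"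
      using leaf_not_ret[OF f3(6)] by (auto simp: D_def)
  qed
  show ?thesis using red net' cardlt restr ext by blast
qed



lemma ret_struct:
  assumes N: "network (V,A)" "binary (V,A)" and c: "is_ret_cherry (V,A) x y"
  obtains px py z g where "\<And>a. (a,x) \<in> A \<longleftrightarrow> a = px" "\<And>a. (a,y) \<in> A \<longleftrightarrow> a = py"
    "\<And>b. (px,b) \<in> A \<longleftrightarrow> b = x" "\<And>a. (a,px) \<in> A \<longleftrightarrow> a = py \<or> a = z"
    "\<And>b. (py,b) \<in> A \<longleftrightarrow> b = px \<or> b = y" "\<And>a. (a,py) \<in> A \<longleftrightarrow> a = g"
    "\<And>b. (x,b) \<notin> A" "\<And>b. (y,b) \<notin> A"
    "x \<noteq> y" "px \<noteq> py" "z \<noteq> py" "z \<noteq> px" "g \<noteq> py" "g \<noteq> px" "px \<noteq> x" "px \<noteq> y"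
    "py \<noteq> x" "py \<noteq> y" "z \<noteq> x" "z \<noteq> y" "g \<noteq> x" "g \<noteq> y"
    "x \<in> V" "y \<in> V" "px \<in> V" "py \<in> V" "z \<in> V" "g \<in> V"
    "parent A x = px" "parent A y = py" "is_leaf A x" "is_leaf A y" "is_ret A px" "ins A py = {g}"
proof -
  note b = net_basic[OF N(1)]
  have xy: "x \<in> V" "y \<in> V" "is_leaf A x" "is_leaf A y" "x \<noteq> y"
    and rp: "is_ret A (parent A x)" and "\<exists>q. (q, parent A x) \<in> A \<and> (q, y) \<in> A"
    using c by (auto simp: is_ret_cherry_def leaves_def)
  obtain px where a: "ins A x = {px}" using leaf_ins[OF xy(3) b(5)] by blast
  obtain py where a': "ins A y = {py}" using leaf_ins[OF xy(4) b(5)] by blast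
  have ppx: "parent A x = px" "parent A y = py" using parent_eq[OF a] parent_eq[OF a'] by auto
  obtain q where q: "(q,px) \<in> A" "(q,y) \<in> A" using \<open>\<exists>q. _\<close> ppx by auto
  have qpy: "q = py" using q a' by (auto simp: ins_def)
  have lx: "\<And>b. (x,b) \<notin> A" "\<And>b. (y,b) \<notin> A" using leaf_outs2[OF N(1)] xy by auto
  have pxA: "(px,x) \<in> A" "(py,y) \<in> A" using a a' by (auto simp: ins_def)
  have pxV: "px \<in> V" "py \<in> V" using pxA b(2) by auto
  have rpx: "is_ret A px" using rp ppx by simp
  hence "card (ins A px) = 2 \<and> card (outs A px) = 1" using bin_cases[OF N pxV(1)]
    by (auto simp: is_ret_def indeg_ins outdeg_outs)
  then obtain a1 a2 where i2: "ins A px = {a1,a2}" "a1 \<noteq> a2" and o1: "card (outs A px) = 1"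
    using card2 by blast
  have opx: "outs A px = {x}" using o1 pxA card_1_singletonE unfolding outs_def
    by (metis (mono_tags, lifting) mem_Collect_eq singletonD)
  have pyin: "py \<in> ins A px" using q qpy by (simp add: ins_def)
  define z where "z = (if a1 = py then a2 else a1)"
  have ipx: "ins A px = {py, z}" "z \<noteq> py" using i2 pyin by (auto simp: z_def)
  have pxy: "px \<noteq> y" using lx(2) pxA by auto
  have "{px,y} \<subseteq> outs A py" using q qpy pxA by (auto simp: outs_def)
  hence "card {px,y} \<le> card (outs A py)" using b(6) card_mono by blast
  hence "card (outs A py) \<ge> 2" using pxy by simp
  hence "card (ins A py) = 1 \<and> card (outs A py) = 2" using bin_cases[OF N pxV(2)] by auto
  then obtain g where ipy: "ins A py = {g}" and o2: "card (outs A py) = 2" using card_1_singletonE by metis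
  have opy: "outs A py = {px,y}"
    using \<open>{px,y} \<subseteq> outs A py\<close> o2 pxy b(6) by (metis card_2_iff card_subset_eq finite.emptyI finite.insertI)
  have gA: "(g,py) \<in> A" "(z,px) \<in> A" using ipy ipx by (auto simp: ins_def)
  have d1: "px \<noteq> py" using noloop[OF b(3)] q qpy by auto
  have d2: "z \<noteq> px" using noloop[OF b(3)] gA by auto
  have d3: "g \<noteq> py" using noloop[OF b(3)] gA by auto
  have d4: "g \<noteq> px" using no2cycle[OF b(3)] gA q qpy by auto
  have d5: "px \<noteq> x" "py \<noteq> x" "py \<noteq> y" "z \<noteq> x" "z \<noteq> y" "g \<noteq> x" "g \<noteq> y"
    using lx pxA q gA by auto
  have zgV: "z \<in> V" "g \<in> V" using gA b(2) by auto
  have e1: "\<And>a. (a,x) \<in> A \<longleftrightarrow> a = px" "\<And>a. (a,y) \<in> A \<longleftrightarrow> a = py"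
    using a a' by (auto simp: ins_def set_eq_iff)
  have e2: "\<And>b. (px,b) \<in> A \<longleftrightarrow> b = x" "\<And>a. (a,px) \<in> A \<longleftrightarrow> a = py \<or> a = z"
    "\<And>b. (py,b) \<in> A \<longleftrightarrow> b = px \<or> b = y" "\<And>a. (a,py) \<in> A \<longleftrightarrow> a = g"
    using opx ipx opy ipy by (auto simp: ins_def outs_def set_eq_iff)
  show ?thesis using that[OF e1 e2 lx xy(5) d1 ipx(2) d2 d3 d4 d5(1) pxy d5(2-) xy(1,2) pxV zgV ppx xy(3,4) rpx ipy] .
qed

lemma ret_step:
  assumes N: "network (V,A)" "binary (V,A)" and c: "is_ret_cherry (V,A) x y"
  shows "\<exists>V' A'. reduce_pair (V,A) (x,y) = (V',A') \<and> network (V',A') \<and> binary (V',A') \<and> card V' < card V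
     \<and> (\<forall>t. hgt_consistent (V,A) t \<and> t (parent A x) = t (parent A y) \<longrightarrow> hgt_consistent (V',A') t)
     \<and> ((\<exists>t. hgt_consistent (V',A') t) \<longrightarrow> (\<exists>t. hgt_consistent (V,A) t))"
proof -
  note b = net_basic[OF N(1)]
  obtain px py z g where f1: "\<And>a. (a,x) \<in> A \<longleftrightarrow> a = px" "\<And>a. (a,y) \<in> A \<longleftrightarrow> a = py"
    "\<And>b. (px,b) \<in> A \<longleftrightarrow> b = x" "\<And>a. (a,px) \<in> A \<longleftrightarrow> a = py \<or> a = z"
    "\<And>b. (py,b) \<in> A \<longleftrightarrow> b = px \<or> b = y" "\<And>a. (a,py) \<in> A \<longleftrightarrow> a = g"
    "\<And>b. (x,b) \<notin> A" "\<And>b. (y,b) \<notin> A"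
    and f2: "x \<noteq> y" "px \<noteq> py" "z \<noteq> py" "z \<noteq> px" "g \<noteq> py" "g \<noteq> px" "px \<noteq> x" "px \<noteq> y"
    "py \<noteq> x" "py \<noteq> y" "z \<noteq> x" "z \<noteq> y" "g \<noteq> x" "g \<noteq> y"
    and f3: "x \<in> V" "y \<in> V" "px \<in> V" "py \<in> V" "z \<in> V" "g \<in> V"
    and f4: "parent A x = px" "parent A y = py" "is_leaf A x" "is_leaf A y" "is_ret A px" "ins A py = {g}"
    using ret_struct[OF N c] by blast
  define D where "D = {px,py}"
  define E where "E = {(z,x),(g,y)}"
  define V' where "V' = V - D"
  define A' where "A' = {(a,b)\<in>A. a\<notin>D \<and> b\<notin>D} \<union> E"
  define A2 where "A2 = {(a,b)\<in>A. a \<noteq> px \<and> b \<noteq> px} \<union> {(z,x)}"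
  have nc: "\<not> is_cherry (V,A) x y" using f1 f2 by (auto simp: is_cherry_def)
  have s1: "{u. (u,px) \<in> A - {(py,px)}} = {z}" using f1 f2 by auto
  have s2: "{w. (px,w) \<in> A - {(py,px)}} = {x}" using f1 f2 by auto
  have "suppress_if (V, A - {(py,px)}) px = suppress (V, A - {(py,px)}) px"
    unfolding suppress_if_def indeg_def outdeg_def fst_conv snd_conv s1 s2 using f3 by simp
  also have "\<dots> = (V - {px}, A2)" unfolding suppress_def A2_def using f1 f2 by auto
  finally have st1: "suppress_if (V, A - {(py,px)}) px = (V - {px}, A2)" .
  have s3: "{u. (u,py) \<in> A2} = {g}" using f1 f2 by (auto simp: A2_def)
  have s4: "{w. (py,w) \<in> A2} = {y}" using f1 f2 by (auto simp: A2_def)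
  have "suppress_if (V - {px}, A2) py = suppress (V - {px}, A2) py"
    unfolding suppress_if_def indeg_def outdeg_def fst_conv snd_conv s3 s4 using f3 f2 by simp
  also have "\<dots> = (V', A')" unfolding suppress_def A2_def V'_def A'_def D_def E_def using f1 f2 by auto
  finally have st2: "suppress_if (V - {px}, A2) py = (V', A')" .
  have red: "reduce_pair (V,A) (x,y) = (V', A')"
    unfolding reduce_pair_def using nc c f4 st1 st2 by (simp add: Let_def)
  have insA': "ins A' v = (if v = x then {z} else if v = y then {g} else ins A v)" if "v \<in> V'" for v
    using that f1 f2 by (auto simp: ins_def A'_def V'_def D_def E_def)
  define f where "f b = (if b = px then x else if b = py then y else b)" for b
  have outsA': "outs A' v = f ` outs A v" if "v \<in> V'" for v
  proof -
    have vD: "v \<noteq> px" "v \<noteq> py" using that by (auto simp: V'_def D_def)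
    show ?thesis
    proof
      show "outs A' v \<subseteq> f ` outs A v"
      proof
        fix w assume "w \<in> outs A' v"
        hence "((v,w) \<in> A \<and> w \<noteq> px \<and> w \<noteq> py) \<or> (v = z \<and> w = x) \<or> (v = g \<and> w = y)"
          by (auto simp: outs_def A'_def D_def E_def)
        thus "w \<in> f ` outs A v"
        proof (elim disjE)
          assume h: "(v,w) \<in> A \<and> w \<noteq> px \<and> w \<noteq> py"
          hence "f w = w" by (simp add: f_def)
          thus ?thesis using h by (metis image_eqI mem_Collect_eq outs_def)
        next
          assume h: "v = z \<and> w = x"
          hence "px \<in> outs A v" "f px = w" using f1 by (auto simp: outs_def f_def)
          thus ?thesis by (metis image_eqI)
        next
          assume h: "v = g \<and> w = y"
          hence "py \<in> outs A v" "f py = w" using f1 f2 by (auto simp: outs_def f_def)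
          thus ?thesis by (metis image_eqI)
        qed
      qed
      show "f ` outs A v \<subseteq> outs A' v"
        using vD f1 f2 by (auto simp: outs_def f_def A'_def D_def E_def)
    qed
  qed
  have inj: "inj_on f (outs A v)" if "v \<in> V'" for v
  proof -
    have vD: "v \<noteq> px" "v \<noteq> py" using that by (auto simp: V'_def D_def)
    hence "x \<notin> outs A v" "y \<notin> outs A v" using f1 by (auto simp: outs_def)
    thus ?thesis using f2 unfolding inj_on_def f_def by auto
  qed
  have deg: "indeg A' v = indeg A v \<and> outdeg A' v = outdeg A v" if v: "v \<in> V'" for v
  proof (rule deg_eq_from_sets[OF b(5) b(6)])
    show "card (ins A' v) = card (ins A v)" using insA'[OF v] f1 by (simp add: ins_def)
    show "card (outs A' v) = card (outs A v)" using outsA'[OF v] inj[OF v] by (simp add: card_image)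
  qed
  obtain r where r: "r \<in> V" "is_root A r" using net_root[OF N(1)] by blast
  have "(py,r) \<notin> A" "(g,r) \<notin> A" using root_not_child[OF N(1) r(2)] by auto
  hence "r \<noteq> px" "r \<noteq> py" using f1 by auto
  hence rV': "r \<in> V'" using r by (auto simp: V'_def D_def)
  have AV: "A' \<subseteq> V' \<times> V'" using b(2) f2 f3 by (auto simp: A'_def V'_def D_def E_def)
  have Atr: "A' \<subseteq> A\<^sup>+"
  proof
    fix e assume "e \<in> A'"
    then consider "e \<in> A" | "e = (z,x)" | "e = (g,y)" by (auto simp: A'_def E_def)
    thus "e \<in> A\<^sup>+"
    proof cases
      case 2
      have "(z,px) \<in> A" "(px,x) \<in> A" using f1 by auto
      thus ?thesis using 2 by auto
    next
      case 3
      have "(g,py) \<in> A" "(py,y) \<in> A" using f1 by auto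
      thus ?thesis using 3 by auto
    qed (erule r_into_trancl')
  qed
  have net': "network (V',A') \<and> binary (V',A')"
    using net_preserve[OF N _ AV Atr deg rV' r(2)] by (auto simp: V'_def)
  have cardlt: "card V' < card V"
  proof (rule psubset_card_mono[OF b(1)])
    show "V' \<subset> V" using f3 by (auto simp: V'_def D_def)
  qed
  have EV: "E \<subseteq> V' \<times> V'" using AV by (auto simp: A'_def)
  have restr: "hgt_consistent (V',A') t" if h: "hgt_consistent (V,A) t" and teq: "t (parent A x) = t (parent A y)" for t
  proof (rule restrict_hgt[OF N(1) h V'_def A'_def EV deg])
    have hh: "\<And>u v. (u,v)\<in>A \<Longrightarrow> t u \<le> t v \<and> (t u = t v \<longrightarrow> is_ret A v)"
      using h by (auto simp: hgt_consistent_def)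
    have h3: "\<And>r u v. r\<in>V \<Longrightarrow> is_ret A r \<Longrightarrow> (u, r) \<in> A \<Longrightarrow> (v, r) \<in> A \<Longrightarrow> u \<noteq> v \<Longrightarrow> ((t u = t r) \<noteq> (t v = t r))"
      using h by (auto simp: hgt_consistent_def)
    have te: "t px = t py" using teq f4 by simp
    have "(z,px) \<in> A" "(g,py) \<in> A" "(px,x) \<in> A" "(py,y) \<in> A" using f1 by auto
    note arcs = this
    have "t z \<le> t px" using hh[OF arcs(1)] by simp
    moreover have "t z \<noteq> t px" using h3[OF f3(3) f4(5) arcs(1), of py] f1(4)[of py] f2(3) te by auto
    moreover have "t px < t x" using hh[OF arcs(3)] leaf_not_ret[OF f4(3)] by force
    ultimately have zx: "t z < t x" by simp
    have "t g \<le> t py" using hh[OF arcs(2)] by simp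
    moreover have "t py < t y" using hh[OF arcs(4)] leaf_not_ret[OF f4(4)] by force
    ultimately have gy: "t g < t y" by simp
    show "\<And>a b. (a,b)\<in>E \<Longrightarrow> t a < t b" using zx gy by (auto simp: E_def)
    show "\<exists>w. (u,w)\<in>E \<and> t u < t w" if u: "u\<in>V'" "v\<in>D" "(u,v)\<in>A" for u v
    proof -
      have un: "u \<noteq> py" using u(1) by (simp add: V'_def D_def)
      have "v = px \<or> v = py" using u(2) by (simp add: D_def)
      thus ?thesis
      proof
        assume "v = px"
        hence "u = z" using f1(4)[of u] u(3) un by simp
        thus ?thesis using zx by (auto simp: E_def)
      next
        assume "v = py"
        hence "u = g" using f1(6)[of u] u(3) by simp
        thus ?thesis using gy by (auto simp: E_def)
      qed
    qed
    show "\<And>a b. (a,b)\<in>E \<Longrightarrow> \<not> is_ret A b" using leaf_not_ret[OF f4(3)] leaf_not_ret[OF f4(4)] by (auto simp: E_def)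
  qed
  have ext: "\<exists>t. hgt_consistent (V,A) t" if h: "hgt_consistent (V',A') t'" for t'
  proof (rule extend_hgt[OF N(1) h _ V'_def A'_def EV deg])
    show "D \<subseteq> V" using f3 by (simp add: D_def)
    show "b\<in>D \<and> is_ret A b" if ab: "a\<in>D" "(a,b)\<in>A" "\<not> is_leaf A b" for a b
    proof -
      have "a = px \<or> a = py" using ab(1) by (simp add: D_def)
      thus ?thesis
      proof
        assume "a = px" hence "b = x" using f1(3) ab(2) by simp
        thus ?thesis using ab(3) f4(3) by simp
      next
        assume "a = py" hence "b = px \<or> b = y" using f1(5) ab(2) by simp
        thus ?thesis using ab(3) f4(4,5) by (auto simp: D_def)
      qed
    qed
    show "\<And>a b. (a,b)\<in>E \<Longrightarrow> \<exists>c\<in>D. (a,c)\<in>A"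
    proof -
      fix a b assume "(a,b)\<in>E"
      hence "(a = z \<and> b = x) \<or> (a = g \<and> b = y)" by (simp add: E_def)
      moreover have "(z,px)\<in>A" "(g,py)\<in>A" using f1 by auto
      ultimately show "\<exists>c\<in>D. (a,c)\<in>A" by (auto simp: D_def)
    qed
    show "\<exists>w. (u,w)\<in>A \<and> is_leaf A w" if "u\<in>D" "\<not> is_leaf A u" for u
    proof -
      have "u = px \<or> u = py" using that(1) by (simp add: D_def)
      moreover have "(px,x)\<in>A" "(py,y)\<in>A" using f1 by auto
      ultimately show ?thesis using f4(3,4) by blast
    qed
    have npy: "\<not> is_ret A py" using f4 by (simp add: is_ret_def indeg_ins)
    show "(u\<in>D) \<noteq> (v\<in>D)" if rr: "r\<in>D" "is_ret A r" "(u,r)\<in>A" "(v,r)\<in>A" "u\<noteq>v" for r u v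
    proof -
      have "r = px" using rr(1,2) npy by (auto simp: D_def)
      hence "(u = py \<or> u = z) \<and> (v = py \<or> v = z)" using f1(4) rr(3,4) by simp
      hence "(u = py \<and> v = z) \<or> (u = z \<and> v = py)" using rr(5) by blast
      thus ?thesis using f2(3,4) by (auto simp: D_def)
    qed
  qed
  show ?thesis using red net' cardlt restr ext by blast
qed



lemma hgt1: "hgt_consistent (V,A) t \<Longrightarrow> (u,v) \<in> A \<Longrightarrow> t u \<le> t v \<and> (t u = t v \<longrightarrow> is_ret A v)"
  by (auto simp: hgt_consistent_def)
lemma hgt2: "hgt_consistent (V,A) t \<Longrightarrow> u \<in> V \<Longrightarrow> \<not> is_leaf A u \<Longrightarrow> \<exists>v. (u,v) \<in> A \<and> t u < t v"
  by (auto simp: hgt_consistent_def)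
lemma hgt3: "hgt_consistent (V,A) t \<Longrightarrow> r \<in> V \<Longrightarrow> is_ret A r \<Longrightarrow> (u,r) \<in> A \<Longrightarrow> (v,r) \<in> A \<Longrightarrow> u \<noteq> v
   \<Longrightarrow> (t u = t r) \<noteq> (t v = t r)"
  unfolding hgt_consistent_def by blast

lemma reduce_seq_Cons: "reduce_seq N (p # S) = reduce_seq (reduce_pair N p) S"
  by (simp add: reduce_seq_def)

lemma orch_hgt: "network N \<Longrightarrow> binary N \<Longrightarrow> is_tree (reduce_seq N S) \<Longrightarrow> \<exists>t. hgt_consistent N t"
proof (induction S arbitrary: N)
  case Nil
  obtain V A where NV: "N = (V,A)" by fastforce
  thus ?case using Nil tree_hgt by (simp add: reduce_seq_def)
next
  case (Cons p S)
  obtain V A where NV: "N = (V,A)" by fastforce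
  obtain x y where p: "p = (x,y)" by fastforce
  have tr: "is_tree (reduce_seq (reduce_pair (V,A) (x,y)) S)" using Cons.prems NV p by (simp add: reduce_seq_Cons)
  have N: "network (V,A)" "binary (V,A)" using Cons.prems NV by auto
  show ?case
  proof (cases "is_cherry (V,A) x y")
    case True
    then obtain V' A' where st: "reduce_pair (V,A) (x,y) = (V',A')" "network (V',A')" "binary (V',A')"
       "(\<exists>t. hgt_consistent (V',A') t) \<longrightarrow> (\<exists>t. hgt_consistent (V,A) t)"
      using cherry_step[OF N True] by blast
    thus ?thesis using Cons.IH[of "(V',A')"] tr NV by auto
  next
    case nc: False
    show ?thesis
    proof (cases "is_ret_cherry (V,A) x y")
      case True
      then obtain V' A' where st: "reduce_pair (V,A) (x,y) = (V',A')" "network (V',A')" "binary (V',A')"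
         "(\<exists>t. hgt_consistent (V',A') t) \<longrightarrow> (\<exists>t. hgt_consistent (V,A) t)"
        using ret_step[OF N True] by blast
      thus ?thesis using Cons.IH[of "(V',A')"] tr NV by auto
    next
      case False
      hence "reduce_pair (V,A) (x,y) = (V,A)" using nc by (simp add: reduce_pair_def Let_def)
      thus ?thesis using Cons.IH[of "(V,A)"] tr NV N by auto
    qed
  qed
qed

lemma terminal_tree:
  assumes N: "network (V,A)" "binary (V,A)" and nw: "\<not> (\<exists>v\<in>V. \<not> is_root A v \<and> \<not> is_leaf A v)"
  shows "is_tree (V,A) \<and> card (leaves (V,A)) = 1"
proof -
  note b = net_basic[OF N(1)]
  obtain r where r: "r \<in> V" "is_root A r" "\<And>r'. r' \<in> V \<Longrightarrow> is_root A r' \<Longrightarrow> r' = r" using net_root[OF N(1)] by blast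
  have nr: "\<forall>v\<in>V. \<not> is_ret A v" using nw by (auto simp: is_ret_def is_root_def is_leaf_def)
  have "card (outs A r) = 1" using r(2) by (simp add: is_root_def outdeg_outs)
  then obtain c where oc: "outs A r = {c}" using card_1_singletonE by metis
  have rc: "(r,c) \<in> A" using oc by (auto simp: outs_def)
  have cV: "c \<in> V" using rc b(2) by auto
  have "\<not> is_root A c" using root_not_child[OF N(1)] rc by blast
  hence lc: "is_leaf A c" using nw cV by blast
  have "leaves (V,A) = {c}"
  proof
    show "{c} \<subseteq> leaves (V,A)" using lc cV by (simp add: leaves_def)
    show "leaves (V,A) \<subseteq> {c}"
    proof
      fix l assume "l \<in> leaves (V,A)"
      hence l: "l \<in> V" "is_leaf A l" by (auto simp: leaves_def)
      obtain q where q: "ins A l = {q}" using leaf_ins[OF l(2) b(5)] by blast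
      hence qA: "(q,l) \<in> A" by (auto simp: ins_def)
      hence "q \<in> V" "\<not> is_leaf A q" using b(2) has_child_nonleaf[OF qA b(6)] by auto
      hence "is_root A q" using nw by blast
      hence "q = r" using r(3) \<open>q \<in> V\<close> by blast
      thus "l \<in> {c}" using qA oc by (auto simp: outs_def)
    qed
  qed
  thus ?thesis using N(1) nr by (simp add: is_tree_def)
qed

lemma find_pair:
  assumes N: "network (V,A)" "binary (V,A)" and h: "hgt_consistent (V,A) t"
    and ex: "\<exists>v\<in>V. \<not> is_root A v \<and> \<not> is_leaf A v"
  shows "\<exists>x y. is_cherry (V,A) x y \<or> (is_ret_cherry (V,A) x y \<and> t (parent A x) = t (parent A y))"
proof -
  note b = net_basic[OF N(1)]
  define W where "W = {v\<in>V. \<not> is_root A v \<and> \<not> is_leaf A v}"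
  define M where "M = Max (t ` W)"
  have fW: "finite W" using b(1) by (simp add: W_def)
  have neW: "W \<noteq> {}" using ex by (auto simp: W_def)
  have leM: "w \<in> W \<Longrightarrow> t w \<le> M" for w unfolding M_def using fW by simp
  have MW: "M \<in> t ` W" unfolding M_def using fW neW by simp
  have nroot: "\<not> is_root A b" if "(a,b) \<in> A" for a b using root_not_child[OF N(1)] that by blast
  have big_leaf: "is_leaf A w" if "(a,w) \<in> A" "t w > M" for a w
  proof -
    have "w \<in> V" using that(1) b(2) by auto
    moreover have "w \<notin> W" using leM that(2) by force
    ultimately show ?thesis using nroot[OF that(1)] by (auto simp: W_def)
  qed
  have ileaf: "\<not> is_leaf A a" if "(a,w) \<in> A" for a w using has_child_nonleaf[OF that b(6)] .
  show ?thesis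
  proof (cases "\<exists>v\<in>W. t v = M \<and> is_ret A v")
    case True
    then obtain v where v: "v \<in> W" "t v = M" "is_ret A v" by blast
    have vV: "v \<in> V" using v(1) by (simp add: W_def)
    have "card (outs A v) = 1" using v(3) by (simp add: is_ret_def outdeg_outs)
    then obtain x where ox: "outs A v = {x}" using card_1_singletonE by metis
    have vx: "(v,x) \<in> A" using ox by (auto simp: outs_def)
    obtain w where w: "(v,w) \<in> A" "t v < t w" using hgt2[OF h vV] ret_nonleaf[OF v(3)] by blast
    have "w = x" using w(1) ox by (auto simp: outs_def)
    hence tx: "t x > M" using w v(2) by simp
    have lx: "is_leaf A x" using big_leaf[OF vx tx] .
    have "card (ins A v) = 2" using bin_cases[OF N vV] v(3) by (auto simp: is_ret_def indeg_ins outdeg_outs)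
    then obtain a1 a2 where i2: "ins A v = {a1,a2}" "a1 \<noteq> a2" using card2 by blast
    have a12: "(a1,v) \<in> A" "(a2,v) \<in> A" using i2 by (auto simp: ins_def)
    have "(t a1 = t v) \<noteq> (t a2 = t v)" using hgt3[OF h vV v(3) a12 i2(2)] .
    then obtain u where u: "(u,v) \<in> A" "t u = t v" using a12 by blast
    have uV: "u \<in> V" using u(1) b(2) by auto
    have onlyv: "False" if "outs A u = {v}"
    proof -
      obtain w where "(u,w) \<in> A" "t u < t w" using hgt2[OF h uV ileaf[OF u(1)]] by blast
      thus False using that u(2) by (auto simp: outs_def)
    qed
    have "\<not> is_root A u"
    proof
      assume "is_root A u"
      hence "card (outs A u) = 1" by (simp add: is_root_def outdeg_outs)
      then obtain c where "outs A u = {c}" using card_1_singletonE by metis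
      moreover hence "c = v" using u(1) by (auto simp: outs_def)
      ultimately show False using onlyv by simp
    qed
    moreover have "\<not> is_ret A u"
    proof
      assume "is_ret A u"
      hence "card (outs A u) = 1" by (simp add: is_ret_def outdeg_outs)
      then obtain c where "outs A u = {c}" using card_1_singletonE by metis
      moreover hence "c = v" using u(1) by (auto simp: outs_def)
      ultimately show False using onlyv by simp
    qed
    ultimately have "is_tree_node A u" using net_types[OF N(1) uV] ileaf[OF u(1)] by blast
    hence "card (outs A u) = 2" using bin_cases[OF N uV] by (auto simp: is_tree_node_def indeg_ins outdeg_outs)
    then obtain c1 c2 where o2: "outs A u = {c1,c2}" "c1 \<noteq> c2" using card2 by blast
    obtain y where y: "(u,y) \<in> A" "t u < t y" using hgt2[OF h uV ileaf[OF u(1)]] by blast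
    have ty: "t y > M" using y u(2) v(2) by simp
    have ly: "is_leaf A y" using big_leaf[OF y(1) ty] .
    obtain qx where qx: "ins A x = {qx}" using leaf_ins[OF lx b(5)] by blast
    obtain qy where qy: "ins A y = {qy}" using leaf_ins[OF ly b(5)] by blast
    have "v \<in> ins A x" "u \<in> ins A y" using vx y(1) by (auto simp: ins_def)
    hence "qx = v" "qy = u" using qx qy by auto
    hence pxv: "parent A x = v" and pyu: "parent A y = u" using parent_eq[OF qx] parent_eq[OF qy] by auto
    have "u \<noteq> v" using noloop[OF b(3)] u(1) by auto
    hence "x \<noteq> y" using pxv pyu by auto
    moreover have "x \<in> leaves (V,A)" "y \<in> leaves (V,A)" using lx ly vx y(1) b(2) by (auto simp: leaves_def)
    ultimately have "is_ret_cherry (V,A) x y" using pxv v(3) u(1) y(1) by (auto simp: is_ret_cherry_def)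
    moreover have "t (parent A x) = t (parent A y)" using pxv pyu u(2) by simp
    ultimately show ?thesis by blast
  next
    case False
    obtain v where v: "v \<in> W" "t v = M" using MW by blast
    have vV: "v \<in> V" and vr: "\<not> is_root A v" "\<not> is_leaf A v" using v(1) by (auto simp: W_def)
    have nrv: "\<not> is_ret A v" using False v by blast
    have "is_tree_node A v" using net_types[OF N(1) vV] vr nrv by blast
    hence "card (outs A v) = 2" using bin_cases[OF N vV] by (auto simp: is_tree_node_def indeg_ins outdeg_outs)
    then obtain c1 c2 where o2: "outs A v = {c1,c2}" "c1 \<noteq> c2" using card2 by blast
    obtain x where x: "(v,x) \<in> A" "t v < t x" using hgt2[OF h vV vr(2)] by blast
    have lx: "is_leaf A x" using big_leaf[OF x(1)] x(2) v(2) by simp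
    define y where "y = (if x = c1 then c2 else c1)"
    have xin: "x \<in> {c1,c2}" using x(1) o2 by (auto simp: outs_def)
    have yA: "(v,y) \<in> A" "y \<noteq> x" using o2 xin by (auto simp: y_def outs_def)
    have yV: "y \<in> V" using yA b(2) by auto
    have ly: "is_leaf A y"
    proof (rule ccontr)
      assume nl: "\<not> is_leaf A y"
      hence yW: "y \<in> W" using yV nroot[OF yA(1)] by (simp add: W_def)
      have "t v \<le> t y" "t v = t y \<longrightarrow> is_ret A y" using hgt1[OF h yA(1)] by auto
      moreover have "t y \<le> M" using leM yW .
      ultimately have "t y = M" "is_ret A y" using v(2) by auto
      thus False using False yW by blast
    qed
    have "is_cherry (V,A) x y" using lx ly x(1) yA b(2) by (auto simp: is_cherry_def leaves_def)
    thus ?thesis by blast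
  qed
qed

lemma hgt_orch:
  shows "network (V,A) \<Longrightarrow> binary (V,A) \<Longrightarrow> hgt_consistent (V,A) t \<Longrightarrow> orchard (V,A)"
proof (induction "card V" arbitrary: V A rule: less_induct)
  case less
  note N = less.prems(1,2) and h = less.prems(3)
  show ?case
  proof (cases "\<exists>v\<in>V. \<not> is_root A v \<and> \<not> is_leaf A v")
    case False
    hence "is_tree (reduce_seq (V,A) []) \<and> card (leaves (reduce_seq (V,A) [])) = 1"
      using terminal_tree[OF N] by (simp add: reduce_seq_def)
    thus ?thesis unfolding orchard_def by blast
  next
    case True
    then obtain x y where xy: "is_cherry (V,A) x y \<or> (is_ret_cherry (V,A) x y \<and> t (parent A x) = t (parent A y))"
      using find_pair[OF N h] by blast
    obtain V' A' where st: "reduce_pair (V,A) (x,y) = (V',A')" "network (V',A')" "binary (V',A')"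
       "card V' < card V" "hgt_consistent (V',A') t"
    proof (cases "is_cherry (V,A) x y")
      case True thus ?thesis using that cherry_step[OF N True] h by blast
    next
      case False
      hence "is_ret_cherry (V,A) x y" "t (parent A x) = t (parent A y)" using xy by auto
      thus ?thesis using that ret_step[OF N] h by blast
    qed
    have "orchard (V',A')" using less.hyps[OF st(4) st(2,3,5)] .
    then obtain S where "is_tree (reduce_seq (V',A') S) \<and> card (leaves (reduce_seq (V',A') S)) = 1"
      unfolding orchard_def by blast
    hence "is_tree (reduce_seq (V,A) ((x,y)#S)) \<and> card (leaves (reduce_seq (V,A) ((x,y)#S))) = 1"
      using st(1) by (simp add: reduce_seq_Cons)
    thus ?thesis unfolding orchard_def by blast
  qed
qed

theorem mainTheorem5:
  fixes N :: "'a net"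
  assumes "network N" and "binary N"
  shows "orchard N \<longleftrightarrow> (\<exists>t. hgt_consistent N t)"
proof -
  obtain V A where NV: "N = (V,A)" by fastforce
  show ?thesis
  proof
    assume "orchard N"
    then obtain S where "is_tree (reduce_seq N S)" unfolding orchard_def by blast
    thus "\<exists>t. hgt_consistent N t" using orch_hgt assms by blast
  next
    assume "\<exists>t. hgt_consistent N t"
    then obtain t where "hgt_consistent N t" by blast
    thus "orchard N" using hgt_orch[of V A t] assms NV by simp
  qed
qed

end
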